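(* Let $n\ge1$ and $1\le k\le n$. Let $\equiv$ be the equivalence relation on $\mathfrak S_n$ generated by the relations $cab\equiv cba$ and $abc\equiv acb$ for letters $a<b<c$ in three consecutive positions. Among the $\equiv$-classes of $\mathfrak S_n$, exactly $\binom{n-1}{k-1}$ are classes of permutations beginning with the letter $k$.
   Context: Permutations of $\mathfrak S_n$ are words $\sigma_1\cdots\sigma_n$; a relation such as $cab\equiv cba$ allows replacing three adjacent letters forming the pattern $cab$ by the same letters arranged as $cba$, and conversely. *)

theory Defs
  imports Main
begin

definition perms :: "nat \<Rightarrow> nat list set" where
  "perms n = {w. distinct w \<and> set w = {1..n}}"

definition elem_move :: "(nat list \<times> nat list) set" where
  "elem_move = {(u, v). \<exists>x y a b c. a < b \<and> b < c \<and>
      ((u = x @ [c, a, b] @ y \<and> v = x @ [c, b, a] @ y) \<or>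
       (u = x @ [a, b, c] @ y \<and> v = x @ [a, c, b] @ y))}"

definition cong_rel :: "nat \<Rightarrow> (nat list \<times> nat list) set" where
  "cong_rel n = Restr ((elem_move \<union> elem_move\<inverse>)\<^sup>*) (perms n)"

end

theory Submission
  imports Defs
begin


abbreviation EE :: "(nat list \<times> nat list) set" where
  "EE \<equiv> (elem_move \<union> elem_move\<inverse>)\<^sup>*"

lemma EE_sym: "(u, v) \<in> EE \<Longrightarrow> (v, u) \<in> EE"
proof -
  have "sym (elem_move \<union> elem_move\<inverse>)" by (auto simp: sym_def)
  hence "sym EE" by (rule sym_rtrancl)
  moreover assume "(u, v) \<in> EE"
  ultimately show ?thesis by (meson symD)
qed

lemma EE_trans: "(u, v) \<in> EE \<Longrightarrow> (v, w) \<in> EE \<Longrightarrow> (u, w) \<in> EE"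
  by (rule rtrancl_trans)

lemma move_ctx: "(u, v) \<in> elem_move \<Longrightarrow> (p @ u @ s, p @ v @ s) \<in> elem_move"
  unfolding elem_move_def
  apply clarify
  subgoal for x y a b c
    apply (rule_tac x="p @ x" in exI, rule_tac x="y @ s" in exI)
    by auto
  done

lemma EE_ctx: "(u, v) \<in> EE \<Longrightarrow> (p @ u @ s, p @ v @ s) \<in> EE"
proof (induction rule: rtrancl_induct)
  case base then show ?case by simp
next
  case (step y z)
  from step(2) have "(p @ y @ s, p @ z @ s) \<in> elem_move \<union> elem_move\<inverse>"
    using move_ctx by auto
  with step(3) show ?case by (rule rtrancl_into_rtrancl)
qed

lemma EE_cons: "(u, v) \<in> EE \<Longrightarrow> (x # u, x # v) \<in> EE"
  using EE_ctx[of u v "[x]" "[]"] by simp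

lemma EE_app: "(u, v) \<in> EE \<Longrightarrow> (u @ s, v @ s) \<in> EE"
  using EE_ctx[of u v "[]" s] by simp

lemma move_inv:
  assumes "(u, v) \<in> elem_move"
  shows "set u = set v \<and> length u = length v \<and> (distinct u \<longleftrightarrow> distinct v) \<and> hd u = hd v"
  using assms unfolding elem_move_def
  by (auto simp: hd_append split: list.splits)

lemma EE_inv:
  assumes "(u, v) \<in> EE"
  shows "set u = set v \<and> length u = length v \<and> (distinct u \<longleftrightarrow> distinct v) \<and> hd u = hd v"
  using assms
proof (induction rule: rtrancl_induct)
  case base then show ?case by simp
next
  case (step y z)
  then show ?case using move_inv[of y z] move_inv[of z y] by auto
qed

lemma mv1: "a < b \<Longrightarrow> b < c \<Longrightarrow> (X @ [c, a, b] @ Y, X @ [c, b, a] @ Y) \<in> elem_move"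
  unfolding elem_move_def by blast

lemma mv2: "a < b \<Longrightarrow> b < c \<Longrightarrow> (X @ [a, b, c] @ Y, X @ [a, c, b] @ Y) \<in> elem_move"
  unfolding elem_move_def by blast

lemma flip:
  assumes "x < y" "x < d" "y \<noteq> d"
  shows "(x # y # d # t, x # d # y # t) \<in> EE"
proof (cases "y < d")
  case True
  then show ?thesis using mv2[of x y d "[]" t] assms by auto
next
  case False
  then have "d < y" using assms by simp
  then show ?thesis using mv2[of x d y "[]" t] assms by auto
qed

lemma flip_down:
  assumes "x > y" "x > d" "y \<noteq> d"
  shows "(x # y # d # t, x # d # y # t) \<in> EE"
proof (cases "y < d")
  case True
  then show ?thesis using mv1[of y d x "[]" t] assms by auto
next
  case False
  then have "d < y" using assms by simp
  then show ?thesis using mv1[of d y x "[]" t] assms by auto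
qed


definition cmp :: "nat \<Rightarrow> nat list \<Rightarrow> nat list" where
  "cmp N w = map (\<lambda>z. N - z) w"

lemma comp_comp: "\<forall>z\<in>set w. z \<le> N \<Longrightarrow> cmp N (cmp N w) = w"
  unfolding cmp_def by (induction w) auto

lemma move_comp:
  assumes "(u, v) \<in> elem_move" "\<forall>z\<in>set u. z \<le> N"
  shows "(cmp N v, cmp N u) \<in> elem_move"
  using assms(1) unfolding elem_move_def
proof clarify
  fix x y :: "nat list" and a b c :: nat
  assume abc: "a < b" "b < c"
  assume h: "u = x @ [c, a, b] @ y \<and> v = x @ [c, b, a] @ y \<or>
             u = x @ [a, b, c] @ y \<and> v = x @ [a, c, b] @ y"
  have le: "a \<le> N" "b \<le> N" "c \<le> N" using h assms(2) by auto
  from h show "\<exists>x y a b c. a < b \<and> b < c \<and>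
          (cmp N v = x @ [c, a, b] @ y \<and> cmp N u = x @ [c, b, a] @ y \<or>
           cmp N v = x @ [a, b, c] @ y \<and> cmp N u = x @ [a, c, b] @ y)"
  proof
    assume "u = x @ [c, a, b] @ y \<and> v = x @ [c, b, a] @ y"
    then show ?thesis
      using abc le
      by (intro exI[of _ "cmp N x"] exI[of _ "cmp N y"] exI[of _ "N - c"] exI[of _ "N - b"] exI[of _ "N - a"])
        (auto simp: cmp_def)
  next
    assume "u = x @ [a, b, c] @ y \<and> v = x @ [a, c, b] @ y"
    then show ?thesis
      using abc le
      by (intro exI[of _ "cmp N x"] exI[of _ "cmp N y"] exI[of _ "N - c"] exI[of _ "N - b"] exI[of _ "N - a"])
        (auto simp: cmp_def)
  qed
qed

lemma EE_comp:
  assumes "(u, v) \<in> EE" "\<forall>z\<in>set u. z \<le> N"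
  shows "(cmp N u, cmp N v) \<in> EE"
  using assms
proof (induction rule: rtrancl_induct)
  case base then show ?case by simp
next
  case (step y z)
  have sy: "\<forall>z\<in>set y. z \<le> N" using EE_inv[OF step(1)] step(4) by auto
  from step(2) have "(cmp N y, cmp N z) \<in> elem_move \<union> elem_move\<inverse>"
  proof
    assume "(y, z) \<in> elem_move" then show ?thesis using move_comp[OF _ sy] by auto
  next
    assume "(y, z) \<in> elem_move\<inverse>"
    then have "(z, y) \<in> elem_move" by auto
    moreover have "\<forall>w\<in>set z. w \<le> N" using sy move_inv[OF \<open>(z,y) \<in> elem_move\<close>] by auto
    ultimately show ?thesis using move_comp by auto
  qed
  with step(3)[OF step(4)] show ?case by (rule rtrancl_into_rtrancl)
qed




lemma perm_distinct: "distinct xs \<Longrightarrow> set ys = set xs \<Longrightarrow> length ys = length xs \<Longrightarrow> distinct ys"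
  by (metis card_distinct distinct_card)

lemma sls_cons_min:
  assumes "\<forall>z\<in>set s. y < z" "distinct s"
  shows "sorted_list_of_set (set (y # s)) = y # sorted_list_of_set (set s)"
proof -
  have m: "Min (set (y # s)) = y" using assms by (auto intro!: Min_eqI simp: less_imp_le)
  have "set (y # s) - {y} = set s" using assms by auto
  then show ?thesis using sorted_list_of_set_nonempty[of "set (y # s)"] m by simp
qed

lemma L1:
  fixes n :: nat
  shows "\<forall>x B. length B = n \<longrightarrow> distinct (x # B) \<longrightarrow> (\<forall>b\<in>set B. x < b) \<longrightarrow>
     (x # B, x # sorted_list_of_set (set B)) \<in> EE"
proof (induction n rule: less_induct)
  case (less n)
  have any: "(x # B, x # B') \<in> EE"
    if "length B < n" "distinct (x # B)" "\<forall>b\<in>set B. x < b" "distinct B'" "set B' = set B" for x B B'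
  proof -
    have lB': "length B' = length B" using that by (metis distinct_card distinct.simps(2))
    have 1: "(x # B, x # sorted_list_of_set (set B)) \<in> EE" using less.IH that by blast
    have 2: "(x # B', x # sorted_list_of_set (set B')) \<in> EE"
      using less.IH[of "length B", rule_format, of B' x] that lB' by auto
    show ?thesis using 1 EE_sym[OF 2] that(5) by (metis EE_trans)
  qed
  have anyd: "(x # B, x # B') \<in> EE"
    if "length B < n" "distinct (x # B)" "\<forall>b\<in>set B. b < x" "distinct B'" "set B' = set B" for x B B'
  proof -
    have injx: "inj_on (\<lambda>z. x - z) {..x}" by (auto simp: inj_on_def)
    have sub: "set B \<subseteq> {..x}" "set B' \<subseteq> {..x}" using that by auto
    have "distinct (0 # cmp x B)"
      using that(2,3) sub injx unfolding cmp_def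
      by (auto simp: distinct_map intro: inj_on_subset)
    moreover have "distinct (cmp x B')"
      using that(4) sub injx unfolding cmp_def by (auto simp: distinct_map intro: inj_on_subset)
    moreover have "\<forall>b\<in>set (cmp x B). 0 < b" using that(3) unfolding cmp_def by auto
    moreover have "set (cmp x B') = set (cmp x B)" using that(5) unfolding cmp_def by simp
    moreover have "length (cmp x B) < n" using that(1) unfolding cmp_def by simp
    ultimately have "(0 # cmp x B, 0 # cmp x B') \<in> EE" using any by blast
    then have "(cmp x (0 # cmp x B), cmp x (0 # cmp x B')) \<in> EE"
      by (rule EE_comp) (use sub in \<open>auto simp: cmp_def\<close>)
    moreover have "cmp x (0 # cmp x B) = x # B" "cmp x (0 # cmp x B') = x # B'"
      using comp_comp[of B x] comp_comp[of B' x] sub by (auto simp: cmp_def)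
    ultimately show ?thesis by simp
  qed
  show ?case
  proof (intro allI impI)
    fix x :: nat and B :: "nat list"
    assume hB: "length B = n" "distinct (x # B)" "\<forall>b\<in>set B. x < b"
    have "\<forall>B. hd B = y \<longrightarrow> length B = n \<longrightarrow> distinct (x # B) \<longrightarrow> (\<forall>b\<in>set B. x < b) \<longrightarrow>
     (x # B, x # sorted_list_of_set (set B)) \<in> EE" for y :: nat
    proof (induction y rule: less_induct)
      case (less y)
      show ?case
      proof (intro allI impI)
        fix B assume h: "hd B = y" "length B = n" "distinct (x # B)" "\<forall>b\<in>set B. x < b"
        show "(x # B, x # sorted_list_of_set (set B)) \<in> EE"
        proof (cases B)
          case Nil then show ?thesis by simp
        next
          case (Cons y' s)
          with h have B: "B = y # s" by simp
          show ?thesis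
          proof (cases "\<forall>z\<in>set s. y < z")
            case True
            have "(y # s, y # sorted_list_of_set (set s)) \<in> EE"
              using any[of s y "sorted_list_of_set (set s)"] True h B by auto
            then show ?thesis using sls_cons_min[OF True] h B by (auto intro: EE_cons)
          next
            case False
            then obtain z where z: "z \<in> set s" "z < y" using h B
              by (metis distinct.simps(2) distinct_length_2_or_more linorder_neqE_nat)
            then obtain d s' where s: "s = d # s'" by (cases s) auto
            show ?thesis
            proof (cases "d < y")
              case True
              have f: "(x # y # d # s', x # d # y # s') \<in> EE"
                using flip[of x y d s'] h B s True by auto
              have "(x # d # y # s', x # sorted_list_of_set (set (d # y # s'))) \<in> EE"
                using less.IH[OF True, rule_format, of "d # y # s'"] h B s by auto
              moreover have "set (d # y # s') = set B" using B s by auto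
              ultimately show ?thesis using f B s by (metis EE_trans)
            next
              case False
              then have dy: "y < d" using h B s by auto
              define U where "U = takeWhile (\<lambda>z. y < z) s"
              define R where "R = dropWhile (\<lambda>z. y < z) s"
              have sUR: "s = U @ R" unfolding U_def R_def by simp
              have Une: "U \<noteq> []" unfolding U_def using s dy by simp
              have Ugt: "\<forall>b\<in>set U. y < b" unfolding U_def by (auto dest: set_takeWhileD)
              have "R \<noteq> []"
              proof
                assume "R = []"
                then have "s = U" using sUR by simp
                then show False using z Ugt by auto
              qed
              then obtain r1 R' where R: "R = r1 # R'" by (cases R) auto
              have "\<not> y < r1" using R unfolding R_def
                by (metis hd_dropWhile list.distinct(1) list.sel(1))
              moreover have "r1 \<noteq> y" using h B sUR R by auto
              ultimately have r1y: "r1 < y" by simp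
              define u where "u = Max (set U)"
              have uU: "u \<in> set U" unfolding u_def using Une by simp
              have Ule: "\<forall>b\<in>set U. b \<le> u" unfolding u_def by simp
              define W where "W = remove1 u U"
              have dU: "distinct U" using h B sUR by auto
              have setW: "set W = set U - {u}" unfolding W_def using dU by simp
              have lenW: "length U = Suc (length W)" unfolding W_def using uU
                by (simp add: length_remove1) (metis Suc_pred length_pos_if_in_set)
              have dB: "distinct B" using h by simp
              have dxB: "x \<notin> set B" using h by simp
              have Bfull: "B = y # U @ r1 # R'" using B sUR R by simp
              have s1: "(y # U, y # u # W) \<in> EE"
                using any[of U y "u # W"] Bfull h Ugt dU setW uU
                by (auto simp: W_def)
              have e1: "(x # B, x # y # u # W @ r1 # R') \<in> EE"
                using EE_ctx[OF s1, of "[x]" "r1 # R'"] Bfull by simp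
              have e2: "(x # y # u # W @ r1 # R', x # u # y # W @ r1 # R') \<in> EE"
                using flip[of x y u "W @ r1 # R'"] h Bfull uU Ugt by auto
              have Wlt: "\<forall>b\<in>set W. b < u" using setW Ule by force
              have yu: "y < u" using Ugt uU by auto
              have s3: "(u # y # W @ [r1], u # r1 # y # W) \<in> EE"
              proof (rule anyd)
                show "length (y # W @ [r1]) < n" using h Bfull lenW by simp
                show "distinct (u # y # W @ [r1])"
                  using dB Bfull setW uU dU by (auto simp: W_def)
                show "\<forall>b\<in>set (y # W @ [r1]). b < u" using Wlt yu r1y by auto
                show "distinct (r1 # y # W)" using dB Bfull setW uU dU by (auto simp: W_def)
                show "set (r1 # y # W) = set (y # W @ [r1])" by auto
              qed
              have e3: "(x # u # y # W @ r1 # R', x # u # r1 # y # W @ R') \<in> EE"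
                using EE_ctx[OF s3, of "[x]" R'] by simp
              have e4: "(x # u # r1 # y # W @ R', x # r1 # u # y # W @ R') \<in> EE"
                using flip[of x u r1 "y # W @ R'"] h Bfull uU r1y yu by auto
              have setB5: "set (r1 # u # y # W @ R') = set B"
                using Bfull setW uU by auto
              have lenB5: "length (r1 # u # y # W @ R') = n" using h Bfull lenW by simp
              have dB5: "distinct (r1 # u # y # W @ R')"
                using perm_distinct[OF dB setB5] lenB5 h by simp
              have e5': "(x # (r1 # u # y # W @ R'), x # sorted_list_of_set (set (r1 # u # y # W @ R'))) \<in> EE"
                apply (rule less.IH[OF r1y, rule_format])
                using setB5 lenB5 dB5 dxB h by auto
              have e5: "(x # r1 # u # y # W @ R', x # sorted_list_of_set (set B)) \<in> EE"
                using e5' unfolding setB5 by simp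
              show ?thesis using e1 e2 e3 e4 e5 by (metis EE_trans)
            qed
          qed
        qed
      qed
    qed
    then show "(x # B, x # sorted_list_of_set (set B)) \<in> EE" using hB by blast
  qed
qed

lemma L1_any:
  fixes x :: nat and B B' :: "nat list"
  assumes "distinct (x # B)" "\<forall>b\<in>set B. x < b" "distinct B'" "set B' = set B"
  shows "(x # B, x # B') \<in> EE"
proof -
  have lB': "length B' = length B" using assms by (metis distinct_card distinct.simps(2))
  have 1: "(x # B, x # sorted_list_of_set (set B)) \<in> EE" using L1 assms by blast
  have 2: "(x # B', x # sorted_list_of_set (set B')) \<in> EE"
    using L1[of "length B", rule_format, of B' x] assms lB' by auto
  show ?thesis using 1 EE_sym[OF 2] assms(4) by (metis EE_trans)
qed




definition conv :: "nat set \<Rightarrow> nat set \<Rightarrow> bool" where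
  "conv S T = (\<forall>a\<in>T. \<forall>c\<in>T. \<forall>b\<in>S. a < b \<longrightarrow> b < c \<longrightarrow> b \<in> T)"

definition canon :: "nat list \<Rightarrow> bool" where
  "canon w = (\<forall>i. conv (set w) (set (take i w)))"

lemma conv_comp:
  assumes "conv S T" "T \<subseteq> S" "S \<subseteq> {..N}"
  shows "conv ((\<lambda>z. N - z) ` S) ((\<lambda>z. N - z) ` T)"
  unfolding conv_def
proof (clarify)
  fix a c b assume h: "a \<in> T" "c \<in> T" "b \<in> S" "N - a < N - b" "N - b < N - c"
  then have "c < b" "b < a" using assms by auto
  then have "b \<in> T" using assms(1) h unfolding conv_def by blast
  then show "N - b \<in> (\<lambda>z. N - z) ` T" by blast
qed

lemma canon_comp:
  assumes "canon w" "\<forall>z\<in>set w. z \<le> N"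
  shows "canon (cmp N w)"
  unfolding canon_def cmp_def
proof
  fix i
  have "conv ((\<lambda>z. N - z) ` set w) ((\<lambda>z. N - z) ` set (take i w))"
    apply (rule conv_comp)
    using assms unfolding canon_def by (auto dest: in_set_takeD)
  then show "conv (set (map (\<lambda>z. N - z) w)) (set (take i (map (\<lambda>z. N - z) w)))"
    by (simp add: take_map)
qed

lemma sorted_take_closed:
  assumes "sorted L" "c \<in> set (take j L)" "b \<in> set L" "b < c"
  shows "b \<in> set (take j L)"
proof (rule ccontr)
  assume "b \<notin> set (take j L)"
  then have "b \<in> set (drop j L)" using assms(3)
    by (metis Un_iff append_take_drop_id set_append)
  moreover have "\<forall>u\<in>set (take j L). \<forall>v\<in>set (drop j L). u \<le> v"
    using assms(1) sorted_append[of "take j L" "drop j L"] by simp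
  ultimately have "c \<le> b" using assms(2) by blast
  then show False using assms(4) by simp
qed

lemma step_up:
  assumes dist: "distinct (x # y # s)" and cn: "canon (y # s)" and xy: "x < y"
  shows "\<exists>c'. (x # y # s, c') \<in> EE \<and> canon c'"
proof -
  define s1 where "s1 = takeWhile (\<lambda>z. x < z) s"
  define s2 where "s2 = dropWhile (\<lambda>z. x < z) s"
  define A where "A = y # s1"
  define A' where "A' = sorted_list_of_set (set A)"
  have ss: "s = s1 @ s2" unfolding s1_def s2_def by simp
  have Agt: "\<forall>b\<in>set A. x < b" unfolding A_def s1_def using xy by (auto dest: set_takeWhileD)
  have dA: "distinct (x # A)" using dist ss unfolding A_def by auto
  have e1: "(x # A, x # A') \<in> EE" unfolding A'_def
    by (rule L1_any) (use dA Agt in auto)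
  have e: "(x # y # s, x # A' @ s2) \<in> EE"
    using EE_app[OF e1, of s2] ss unfolding A_def by simp
  define S where "S = set (y # s)"
  have setA': "set A' = set A" unfolding A'_def by simp
  have sA': "sorted A'" unfolding A'_def by simp
  have pref: "set (take (length A + k) (y # s)) = set A \<union> set (take k s2)" for k
    unfolding A_def using ss by simp
  have convc: "conv S (set (take i (y # s)))" for i using cn unfolding canon_def S_def by simp
  have AS: "set A \<subseteq> S" unfolding A_def S_def using ss by auto
  have keyA: "b \<in> set A" if "b \<in> S" "x < b" "b < c" "c \<in> set A" for b c
  proof (cases s2)
    case Nil
    then show ?thesis using that ss unfolding S_def A_def by auto
  next
    case (Cons d s2')
    have "\<not> x < d" using Cons unfolding s2_def by (metis hd_dropWhile list.distinct(1) list.sel(1))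
    moreover have "d \<noteq> x" using dist ss Cons by auto
    ultimately have dx: "d < x" by simp
    have "set (take (length A + 1) (y # s)) = insert d (set A)" using pref[of 1] Cons by simp
    then have "conv S (insert d (set A))" using convc by metis
    then have "b \<in> insert d (set A)" using that dx unfolding conv_def by (meson insertCI less_trans)
    then show ?thesis using dx that by auto
  qed
  have "canon (x # A' @ s2)"
    unfolding canon_def
  proof
    fix i
    have Sc: "set (x # A' @ s2) = insert x S" unfolding S_def A_def using setA' ss by (auto simp: A_def)
    show "conv (set (x # A' @ s2)) (set (take i (x # A' @ s2)))"
    proof (cases i)
      case 0 then show ?thesis by (simp add: conv_def)
    next
      case (Suc j)
      show ?thesis
      proof (cases "j \<le> length A'")
        case True
        then have tk: "set (take i (x # A' @ s2)) = insert x (set (take j A'))" using Suc by simp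
        show ?thesis unfolding tk Sc conv_def
        proof (intro ballI impI)
          fix a c b
          assume h: "a \<in> insert x (set (take j A'))" "c \<in> insert x (set (take j A'))"
            "b \<in> insert x S" "a < b" "b < c"
          show "b \<in> insert x (set (take j A'))"
          proof (rule ccontr)
          assume h6: "b \<notin> insert x (set (take j A'))"
          have ax: "x \<le> a" using h(1) setA' Agt by (auto dest: in_set_takeD simp: less_imp_le)
          have cA: "c \<in> set (take j A')" using h ax by auto
          have bx: "x < b" using ax h by simp
          then have bS: "b \<in> S" using h(3) by auto
          have "b \<in> set A" using keyA[OF bS bx h(5)] cA setA' by (auto dest: in_set_takeD)
          then have "b \<in> set (take j A')" using sorted_take_closed[OF sA' cA] setA' h(5) by auto
          then show False using h6 by simp
        qed
        qed
      next
        case False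
        then obtain k where k: "j = length A' + k" by (metis le_add_diff_inverse nat_le_linear)
        have lA: "length A' = length A" unfolding A'_def using dA
          by (simp add: distinct_card)
        have tk: "set (take i (x # A' @ s2)) = insert x (set (take (length A + k) (y # s)))"
          using Suc k pref[of k] setA' lA by simp
        define P where "P = set (take (length A + k) (y # s))"
        have cP: "conv S P" unfolding P_def using convc by simp
        have yP: "y \<in> P" unfolding P_def by (simp add: A_def)
        show ?thesis unfolding tk Sc conv_def P_def[symmetric]
        proof (intro ballI impI)
          fix a c b
          assume h: "a \<in> insert x P" "c \<in> insert x P" "b \<in> insert x S" "a < b" "b < c"
          show "b \<in> insert x P"
          proof (rule ccontr)
            assume h6: "b \<notin> insert x P"
            have bS: "b \<in> S" using h h6 by auto
            have bx: "b \<noteq> x" using h6 by auto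
            show False
            proof (cases s2)
              case Nil
              have "P = S" unfolding P_def S_def using ss Nil pref[of k] by (auto simp: A_def)
              then show False using bS h6 by simp
            next
              case (Cons d s2')
              have "\<not> x < d" using Cons unfolding s2_def by (metis hd_dropWhile list.distinct(1) list.sel(1))
              moreover have "d \<noteq> x" using dist ss Cons by auto
              ultimately have dx: "d < x" by simp
              show False
              proof (cases "k = 0")
                case True
                then have "j \<le> length A'" using k by simp
                then show False using False by simp
              next
                case False
                then have "d \<in> P" unfolding P_def using pref[of k] Cons
                  by (metis Un_iff gr0_implies_Suc list.set_intros(1) take_Suc_Cons neq0_conv)
                have cP': "\<And>a' c'. a' \<in> P \<Longrightarrow> c' \<in> P \<Longrightarrow> a' < b \<Longrightarrow> b < c' \<Longrightarrow> b \<in> P"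
                  using cP bS unfolding conv_def by blast
                have "a \<in> P \<or> a = x" "c \<in> P \<or> c = x" using h by auto
                moreover have "b \<notin> P" using h6 by simp
                ultimately show False
                proof (elim disjE)
                  assume "a \<in> P" "c \<in> P" then show False using cP' h \<open>b \<notin> P\<close> by blast
                next
                  assume "a \<in> P" "c = x"
                  then have "b < y" using h xy by simp
                  then show False using cP'[OF \<open>a \<in> P\<close> yP] h \<open>b \<notin> P\<close> by blast
                next
                  assume "a = x" "c \<in> P"
                  then have "d < b" using h dx by simp
                  then show False using cP'[OF \<open>d \<in> P\<close> \<open>c \<in> P\<close>] h \<open>b \<notin> P\<close> by blast
                next
                  assume "a = x" "c = x" then show False using h by simp
                qed
              qed
            qed
          qed
        qed
      qed
    qed
  qed
  then show ?thesis using e by blast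
qed




lemma canon_Nil: "canon []" by (simp add: canon_def conv_def)
lemma canon_single: "canon [x]"
  unfolding canon_def conv_def by (auto simp: take_Cons' split: if_splits)

lemma T: "distinct u \<Longrightarrow> \<exists>c. (u, c) \<in> EE \<and> canon c"
proof (induction u)
  case Nil then show ?case using canon_Nil by blast
next
  case (Cons x r)
  then obtain c where c: "(r, c) \<in> EE" "canon c" by auto
  have inv: "set r = set c" "length r = length c" "distinct c" using EE_inv[OF c(1)] Cons.prems by auto
  show ?case
  proof (cases c)
    case Nil
    then have "r = []" using inv by simp
    then show ?thesis using canon_single by blast
  next
    case (Cons y s)
    have e0: "(x # r, x # c) \<in> EE" using EE_cons[OF c(1)] .
    have dxc: "distinct (x # y # s)" using Cons.prems inv Cons by auto
    show ?thesis
    proof (cases "x < y")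
      case True
      obtain c' where "(x # y # s, c') \<in> EE" "canon c'" using step_up[OF dxc _ True] c(2) Cons by auto
      then show ?thesis using e0 Cons by (metis EE_trans)
    next
      case False
      then have yx: "y < x" using dxc by auto
      define N where "N = Max (set (x # c))"
      have leN: "\<forall>z\<in>set (x # c). z \<le> N" unfolding N_def by simp
      have injN: "inj_on (\<lambda>z. N - z) (set (x # c))" using leN unfolding inj_on_def by (metis diff_diff_cancel)
      have d2: "distinct (cmp N (x # y # s))"
        unfolding cmp_def using dxc injN Cons by (simp add: distinct_map)
      have cc: "canon (cmp N (y # s))" using canon_comp[OF c(2)] leN Cons by simp
      have lt: "N - x < N - y" using leN yx Cons by auto
      obtain c' where c': "((N - x) # cmp N (y # s), c') \<in> EE" "canon c'"
        using step_up[of "N - x" "N - y" "cmp N s"] d2 cc lt by (auto simp: cmp_def)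
      have "(cmp N ((N - x) # cmp N (y # s)), cmp N c') \<in> EE"
        by (rule EE_comp[OF c'(1)]) (auto simp: cmp_def)
      moreover have "cmp N ((N - x) # cmp N (y # s)) = x # c"
        using comp_comp[of "x # c" N] leN Cons by (simp add: cmp_def)
      moreover have "canon (cmp N c')"
      proof (rule canon_comp[OF c'(2)])
        have sc: "set ((N - x) # cmp N (y # s)) = set c'" using EE_inv[OF c'(1)] by (elim conjE) assumption
        show "\<forall>z\<in>set c'. z \<le> N"
        proof
          fix z assume "z \<in> set c'"
          then have "z \<in> set ((N - x) # cmp N (y # s))" using sc by simp
          then show "z \<le> N" by (auto simp: cmp_def)
        qed
      qed
      ultimately show ?thesis using e0 by (metis EE_trans)
    qed
  qed
qed

fun gen :: "nat \<Rightarrow> nat \<Rightarrow> bool list \<Rightarrow> nat list" where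
  "gen a b [] = []"
| "gen a b (t # bs) = (if t then (a - 1) # gen (a - 1) b bs else (b + 1) # gen a (b + 1) bs)"

abbreviation nt :: "bool list \<Rightarrow> nat" where "nt bs \<equiv> length (filter (\<lambda>x. x) bs)"

lemma gen_len: "length (gen a b bs) = length bs"
  by (induction bs arbitrary: a b) auto

lemma gen_set:
  "nt bs \<le> a \<Longrightarrow> a \<le> b \<Longrightarrow>
   set (gen a b bs) = {a - nt bs..<a} \<union> {b<..b + (length bs - nt bs)} \<and> distinct (gen a b bs)"
proof (induction bs arbitrary: a b)
  case Nil then show ?case by simp
next
  case (Cons t bs)
  show ?case
  proof (cases t)
    case True
    have IH: "set (gen (a - 1) b bs) = {a - 1 - nt bs..<a - 1} \<union> {b<..b + (length bs - nt bs)} \<and> distinct (gen (a - 1) b bs)"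
      using Cons True by (intro Cons.IH) auto
    have le: "nt bs \<le> length bs" by (rule length_filter_le)
    have a1: "1 \<le> a" using Cons.prems True by simp
    have eq: "insert (a - 1) {a - 1 - nt bs..<a - 1} = {a - Suc (nt bs)..<a}" using a1 by auto
    have g: "gen a b (t # bs) = (a - 1) # gen (a - 1) b bs" using True by simp
    have nt: "nt (t # bs) = Suc (nt bs)" "length (t # bs) - nt (t # bs) = length bs - nt bs" using True by auto
    have "set (gen a b (t # bs)) = insert (a - 1) ({a - 1 - nt bs..<a - 1} \<union> {b<..b + (length bs - nt bs)})"
      using g IH by simp
    also have "\<dots> = {a - nt (t # bs)..<a} \<union> {b<..b + (length (t # bs) - nt (t # bs))}"
      unfolding nt using eq by auto
    finally have 1: "set (gen a b (t # bs)) = {a - nt (t # bs)..<a} \<union> {b<..b + (length (t # bs) - nt (t # bs))}" .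
    have "a - 1 \<notin> set (gen (a - 1) b bs)" using IH Cons.prems by auto
    then have 2: "distinct (gen a b (t # bs))" using g IH by simp
    show ?thesis using 1 2 by simp
  next
    case False
    have IH: "set (gen a (b + 1) bs) = {a - nt bs..<a} \<union> {b + 1<..b + 1 + (length bs - nt bs)} \<and> distinct (gen a (b + 1) bs)"
      using Cons False by (intro Cons.IH) auto
    have le: "nt bs \<le> length bs" by (rule length_filter_le)
    have s1: "Suc (length bs) - nt bs = Suc (length bs - nt bs)" by (rule Suc_diff_le[OF le])
    have gm: "\<And>m. insert (b + 1) {b + 1<..b + 1 + m} = {b<..b + Suc m}" by auto
    have "insert (b + 1) {b + 1<..b + 1 + (length bs - nt bs)} = {b<..b + (Suc (length bs) - nt bs)}"
      unfolding s1 by (rule gm)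
    then show ?thesis using IH False Cons.prems le by auto
  qed
qed

lemma gen_int:
  "nt bs \<le> a \<Longrightarrow> a \<le> b \<Longrightarrow> \<exists>lo hi. set (take i (gen a b bs)) \<union> {a..b} = {lo..hi}"
proof (induction bs arbitrary: a b i)
  case Nil then show ?case by auto
next
  case (Cons t bs)
  show ?case
  proof (cases i)
    case 0 then show ?thesis by auto
  next
    case (Suc j)
    show ?thesis
    proof (cases t)
      case True
      have pr: "nt bs \<le> a - 1" "a - 1 \<le> b" using Cons.prems True by auto
      obtain lo hi where "set (take j (gen (a - 1) b bs)) \<union> {a - 1..b} = {lo..hi}"
        using Cons.IH[OF pr, of j] by blast
      moreover have "{a - 1..b} = insert (a - 1) {a..b}" using Cons.prems True by auto
      ultimately show ?thesis using Suc True by auto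
    next
      case False
      have pr: "nt bs \<le> a" "a \<le> b + 1" using Cons.prems False by auto
      obtain lo hi where "set (take j (gen a (b + 1) bs)) \<union> {a..b + 1} = {lo..hi}"
        using Cons.IH[OF pr, of j] by blast
      moreover have "{a..b + 1} = insert (b + 1) {a..b}" using Cons.prems by auto
      ultimately show ?thesis using Suc False by auto
    qed
  qed
qed

lemma gen_canon:
  assumes "nt bs \<le> k"
  shows "canon (k # gen k k bs)"
  unfolding canon_def
proof
  fix i
  show "conv (set (k # gen k k bs)) (set (take i (k # gen k k bs)))"
  proof (cases i)
    case 0 then show ?thesis by (simp add: conv_def)
  next
    case (Suc j)
    obtain lo hi where "set (take j (gen k k bs)) \<union> {k..k} = {lo..hi}"
      using gen_int[OF assms, of k j] by auto
    then have "set (take i (k # gen k k bs)) = {lo..hi}" using Suc by auto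
    then show ?thesis by (auto simp: conv_def)
  qed
qed





lemma gen_recover:
  "\<forall>p a b. distinct (p @ r) \<longrightarrow> set (p @ r) = {1..n} \<longrightarrow> set p = {a..b} \<longrightarrow> canon (p @ r)
    \<longrightarrow> 1 \<le> a \<longrightarrow> a \<le> k \<longrightarrow> k \<le> b \<longrightarrow> r = gen a b (map (\<lambda>z. z < k) r)"
proof (induction r)
  case Nil then show ?case by simp
next
  case (Cons z r)
  show ?case
  proof (intro allI impI)
    fix p a b
    assume h: "distinct (p @ z # r)" "set (p @ z # r) = {1..n}" "set p = {a..b}" "canon (p @ z # r)"
      "1 \<le> a" "a \<le> k" "k \<le> b"
    have "conv (set (p @ z # r)) (set (take (Suc (length p)) (p @ z # r)))"
      using h(4) unfolding canon_def by blast
    then have cv: "conv {1..n} (insert z {a..b})" using h(2,3) by simp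
    have cv': "\<And>u w v. u \<in> insert z {a..b} \<Longrightarrow> w \<in> insert z {a..b} \<Longrightarrow> v \<in> {1..n} \<Longrightarrow> u < v \<Longrightarrow> v < w
      \<Longrightarrow> v \<in> insert z {a..b}"
      using cv unfolding conv_def by blast
    have zn: "z \<notin> {a..b}" using h(1,3) by auto
    have z1n: "z \<in> {1..n}" using h(2) by auto
    have "b \<in> set p" using h(3) h(6,7) by simp
    then have bn: "b \<le> n" using h(2) by auto
    have ab: "a \<le> b" using h(6,7) by simp
    have distr: "distinct ((p @ [z]) @ r)" "set ((p @ [z]) @ r) = {1..n}" "canon ((p @ [z]) @ r)"
      using h by auto
    show "z # r = gen a b (map (\<lambda>z. z < k) (z # r))"
    proof (cases "z < a")
      case True
      have za: "z = a - 1"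
      proof (rule ccontr)
        assume "z \<noteq> a - 1"
        then have lt: "z < a - 1" using True by simp
        have "a - 1 \<in> {1..n}" using z1n lt ab bn by auto
        then have "a - 1 \<in> insert z {a..b}" using cv'[of z a "a - 1"] lt ab h(5) by auto
        then show False using lt h(5) by auto
      qed
      have a1: "1 \<le> a - 1" using za z1n by simp
      have sp: "set (p @ [z]) = {a - 1..b}"
        using h(3) za atLeastAtMost_insertL[of "a - 1" b] a1 ab by auto
      have "r = gen (a - 1) b (map (\<lambda>z. z < k) r)"
        using Cons.IH[rule_format, OF distr(1,2) sp distr(3) a1] h(6,7) by simp
      then show ?thesis using za True h(6) by simp
    next
      case False
      then have zb: "b < z" using zn by auto
      have zb1: "z = b + 1"
      proof (rule ccontr)
        assume "z \<noteq> b + 1"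
        then have lt: "b + 1 < z" using zb by simp
        have "b + 1 \<in> {1..n}" using z1n lt by auto
        then have "b + 1 \<in> insert z {a..b}" using cv'[of b z "b + 1"] lt ab by auto
        then show False using lt by auto
      qed
      have sp: "set (p @ [z]) = {a..b + 1}"
        using h(3) zb1 atLeastAtMostSuc_conv[of a b] ab by auto
      have "r = gen a (b + 1) (map (\<lambda>z. z < k) r)"
        using Cons.IH[rule_format, OF distr(1,2) sp distr(3) h(5,6)] h(7) by simp
      then show ?thesis using zb1 zb h(7) by simp
    qed
  qed
qed

definition Iv :: "nat list \<Rightarrow> nat \<Rightarrow> nat \<Rightarrow> bool" where
  "Iv w v u = (hd (filter (\<lambda>z. z \<le> v \<or> u \<le> z) w) \<le> v)"

lemma Iv_move: "(p, q) \<in> elem_move \<Longrightarrow> Iv p = Iv q"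
proof -
  assume "(p, q) \<in> elem_move"
  then obtain X Y a b c where abc: "a < b" "b < c" and
    h: "(p = X @ [c, a, b] @ Y \<and> q = X @ [c, b, a] @ Y) \<or> (p = X @ [a, b, c] @ Y \<and> q = X @ [a, c, b] @ Y)"
    unfolding elem_move_def by blast
  show ?thesis
  proof (intro ext)
    fix v u :: nat
    let ?f = "\<lambda>z. z \<le> v \<or> u \<le> z"
    show "Iv p v u = Iv q v u"
    proof (cases "filter ?f X = []")
      case False
      then show ?thesis using h unfolding Iv_def by auto
    next
      case True
      from h show ?thesis
      proof
        assume "p = X @ [c, a, b] @ Y \<and> q = X @ [c, b, a] @ Y"
        then show ?thesis using True abc unfolding Iv_def by auto
      next
        assume "p = X @ [a, b, c] @ Y \<and> q = X @ [a, c, b] @ Y"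
        then show ?thesis using True abc unfolding Iv_def by auto
      qed
    qed
  qed
qed

lemma Iv_EE: "(p, q) \<in> EE \<Longrightarrow> Iv p = Iv q"
proof (induction rule: rtrancl_induct)
  case base then show ?case by simp
next
  case (step y z)
  then show ?case using Iv_move[of y z] Iv_move[of z y] by auto
qed

lemma gen_unique:
  "\<forall>p a b bs2. length bs1 = length bs2 \<longrightarrow> nt bs1 \<le> a \<longrightarrow> nt bs2 \<le> a \<longrightarrow> a \<le> b \<longrightarrow>
     set p \<subseteq> {a..b} \<longrightarrow> Iv (p @ gen a b bs1) = Iv (p @ gen a b bs2) \<longrightarrow> bs1 = bs2"
proof (induction bs1)
  case Nil then show ?case by simp
next
  case (Cons t1 bs1)
  show ?case
  proof (intro allI impI)
    fix p a b bs2
    assume h: "length (t1 # bs1) = length bs2" "nt (t1 # bs1) \<le> a" "nt bs2 \<le> a" "a \<le> b"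
      "set p \<subseteq> {a..b}" "Iv (p @ gen a b (t1 # bs1)) = Iv (p @ gen a b bs2)"
    have IH1: "\<And>p a b bs2. length bs1 = length bs2 \<Longrightarrow> nt bs1 \<le> a \<Longrightarrow> nt bs2 \<le> a \<Longrightarrow> a \<le> b \<Longrightarrow>
      set p \<subseteq> {a..b} \<Longrightarrow> Iv (p @ gen a b bs1) = Iv (p @ gen a b bs2) \<Longrightarrow> bs1 = bs2"
      using Cons.IH by blast
    obtain t2 bs2' where b2: "bs2 = t2 # bs2'" using h(1) by (cases bs2) auto
    let ?f = "\<lambda>z. z \<le> a - 1 \<or> b + 1 \<le> z"
    have diffcase: False if "t1 \<noteq> t2" "1 \<le> a"
    proof -
      have pa: "\<forall>x\<in>set p. a \<le> x \<and> x \<le> b" using h(5) by auto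
      have fp: "filter ?f p = []" using pa \<open>1 \<le> a\<close> by (auto simp: filter_empty_conv)
      have "Iv (p @ gen a b (t1 # bs1)) (a - 1) (b + 1) \<noteq> Iv (p @ gen a b bs2) (a - 1) (b + 1)"
        using that b2 fp h(4) unfolding Iv_def by (cases t1) auto
      then show False using h(6) by simp
    qed
    show "t1 # bs1 = bs2"
    proof (cases "t1 = t2")
      case False
      have "1 \<le> a" using h(2,3) False b2 by (cases t1) auto
      then show ?thesis using diffcase False by simp
    next
      case True
      show ?thesis
      proof (cases t1)
        case tt: True
        have "bs1 = bs2'"
        proof (rule IH1[of bs2' "a - 1" b "p @ [a - 1]"])
          show "length bs1 = length bs2'" using h(1) b2 by simp
          show "nt bs1 \<le> a - 1" using h(2) tt by simp
          show "nt bs2' \<le> a - 1" using h(3) b2 True tt by simp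
          show "a - 1 \<le> b" using h(4) by simp
          show "set (p @ [a - 1]) \<subseteq> {a - 1..b}" using h(4,5) by (fastforce simp: subset_iff)
          show "Iv ((p @ [a - 1]) @ gen (a - 1) b bs1) = Iv ((p @ [a - 1]) @ gen (a - 1) b bs2')"
            using h(6) b2 True tt by simp
        qed
        then show ?thesis using b2 True by simp
      next
        case ff: False
        have "bs1 = bs2'"
        proof (rule IH1[of bs2' a "b + 1" "p @ [b + 1]"])
          show "length bs1 = length bs2'" using h(1) b2 by simp
          show "nt bs1 \<le> a" using h(2) ff by simp
          show "nt bs2' \<le> a" using h(3) b2 True ff by simp
          show "a \<le> b + 1" using h(4) by simp
          show "set (p @ [b + 1]) \<subseteq> {a..b + 1}" using h(4,5) by (fastforce simp: subset_iff)
          show "Iv ((p @ [b + 1]) @ gen a (b + 1) bs1) = Iv ((p @ [b + 1]) @ gen a (b + 1) bs2')"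
            using h(6) b2 True ff by simp
        qed
        then show ?thesis using b2 True by simp
      qed
    qed
  qed
qed

lemma card_bool: "card {bs. length bs = m \<and> nt bs = j} = m choose j"
proof (induction m arbitrary: j)
  case 0
  have "{bs::bool list. length bs = 0 \<and> nt bs = j} = (if j = 0 then {[]} else {})" by auto
  then show ?case by simp
next
  case (Suc m)
  have eq: "{bs. length bs = Suc m \<and> nt bs = j} =
    (Cons True) ` {bs. length bs = m \<and> Suc (nt bs) = j} \<union> (Cons False) ` {bs. length bs = m \<and> nt bs = j}"
  proof (intro set_eqI iffI)
    fix bs assume "bs \<in> {bs. length bs = Suc m \<and> nt bs = j}"
    then show "bs \<in> (Cons True) ` {bs. length bs = m \<and> Suc (nt bs) = j} \<union> (Cons False) ` {bs. length bs = m \<and> nt bs = j}"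
      by (cases bs) auto
  qed auto
  have fin: "finite {bs::bool list. length bs = m \<and> P bs}" for P
    by (rule finite_subset[OF _ finite_lists_length_eq[of "UNIV :: bool set" m]]) auto
  have "card {bs. length bs = Suc m \<and> nt bs = j} =
     card ((Cons True) ` {bs. length bs = m \<and> Suc (nt bs) = j}) + card ((Cons False) ` {bs. length bs = m \<and> nt bs = j})"
    unfolding eq by (rule card_Un_disjoint) (use fin in auto)
  also have "\<dots> = card {bs. length bs = m \<and> Suc (nt bs) = j} + card {bs. length bs = m \<and> nt bs = j}"
    by (simp add: card_image)
  also have "\<dots> = Suc m choose j"
  proof (cases j)
    case 0
    then show ?thesis using Suc.IH[of 0] by simp
  next
    case (Suc j')
    then show ?thesis using Suc.IH[of j'] Suc.IH[of j] by simp
  qed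
  finally show ?case .
qed




theorem mainTheorem10:
  fixes n k :: nat
  assumes "1 \<le> n" and "1 \<le> k" and "k \<le> n"
  shows "card {C \<in> perms n // cong_rel n. \<forall>w\<in>C. hd w = k} = (n - 1) choose (k - 1)"
proof -
  define K where "K = {C \<in> perms n // cong_rel n. \<forall>w\<in>C. hd w = k}"
  define BS where "BS = {bs. length bs = n - 1 \<and> nt bs = k - 1}"
  define \<phi> where "\<phi> bs = cong_rel n `` {k # gen k k bs}" for bs
  have EEperm: "v \<in> perms n" if "w \<in> perms n" "(w, v) \<in> EE" for w v
    using EE_inv[OF that(2)] that(1) unfolding perms_def by auto
  have cls: "cong_rel n `` {w} = {v. (w, v) \<in> EE}" if "w \<in> perms n" for w
    unfolding cong_rel_def using EEperm[OF that] that by auto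
  have genp: "k # gen k k bs \<in> perms n" if "bs \<in> BS" for bs
  proof -
    have nb: "nt bs \<le> k" "length bs - nt bs = n - k" using that assms unfolding BS_def by auto
    have g: "set (gen k k bs) = {k - nt bs..<k} \<union> {k<..k + (length bs - nt bs)} \<and> distinct (gen k k bs)"
      using gen_set[OF nb(1)] by simp
    have "k - nt bs = 1" using that assms unfolding BS_def by auto
    moreover have "k + (length bs - nt bs) = n" using nb assms by simp
    ultimately have "set (gen k k bs) = {1..<k} \<union> {k<..n}" using g by simp
    moreover have "{1..<k} \<union> {k<..n} \<union> {k} = {1..n}" using assms by auto
    ultimately show ?thesis using g unfolding perms_def by auto
  qed
  have wmem: "w \<in> cong_rel n `` {w}" if "w \<in> perms n" for w
    using cls[OF that] by simp
  have inj: "inj_on \<phi> BS"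
  proof (rule inj_onI)
    fix bs1 bs2 assume b: "bs1 \<in> BS" "bs2 \<in> BS" "\<phi> bs1 = \<phi> bs2"
    have "k # gen k k bs2 \<in> \<phi> bs1" using b wmem[OF genp[OF b(2)]] unfolding \<phi>_def by simp
    then have "(k # gen k k bs1, k # gen k k bs2) \<in> EE" using cls[OF genp[OF b(1)]] unfolding \<phi>_def by simp
    then have "Iv ([k] @ gen k k bs1) = Iv ([k] @ gen k k bs2)" using Iv_EE by simp
    then show "bs1 = bs2"
      using gen_unique[rule_format, of bs1 bs2 k k "[k]"] b(1,2) assms unfolding BS_def by auto
  qed
  have img: "\<phi> ` BS = K"
  proof (intro set_eqI iffI)
    fix C assume "C \<in> \<phi> ` BS"
    then obtain bs where bs: "bs \<in> BS" "C = \<phi> bs" by auto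
    have "C \<in> perms n // cong_rel n" unfolding bs(2) \<phi>_def by (rule quotientI[OF genp[OF bs(1)]])
    moreover have "\<forall>w\<in>C. hd w = k"
    proof
      fix v assume "v \<in> C"
      then have "(k # gen k k bs, v) \<in> EE" using bs cls[OF genp[OF bs(1)]] unfolding \<phi>_def by simp
      then show "hd v = k" using EE_inv by fastforce
    qed
    ultimately show "C \<in> K" unfolding K_def by simp
  next
    fix C assume "C \<in> K"
    then have C: "C \<in> perms n // cong_rel n" "\<forall>w\<in>C. hd w = k" unfolding K_def by auto
    then obtain w where w: "w \<in> perms n" "C = cong_rel n `` {w}" by (auto elim: quotientE)
    have hw: "hd w = k" using C(2) wmem[OF w(1)] w(2) by simp
    have "distinct w" using w(1) unfolding perms_def by simp
    then obtain c where c: "(w, c) \<in> EE" "canon c" using T by blast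
    have cp: "c \<in> perms n" using EEperm[OF w(1) c(1)] .
    have hc: "hd c = k" using EE_inv[OF c(1)] hw by simp
    have "distinct c" "set c = {1..n}" using cp unfolding perms_def by auto
    then have "length c = n" using distinct_card[of c] by simp
    then have "c \<noteq> []" using assms by auto
    then obtain r where cr: "c = k # r" using hc by (cases c) auto
    have dc: "distinct ([k] @ r)" "set ([k] @ r) = {1..n}" "canon ([k] @ r)"
      using cp c(2) cr unfolding perms_def by auto
    have rg: "r = gen k k (map (\<lambda>z. z < k) r)"
      using gen_recover[rule_format, OF dc(1) dc(2) _ dc(3), of k k k] assms by simp
    define bs where "bs = map (\<lambda>z. z < k) r"
    have lr: "length r = n - 1" using \<open>length c = n\<close> cr by simp
    have "filter (\<lambda>x. x) bs = map (\<lambda>z. z < k) (filter (\<lambda>z. z < k) r)" unfolding bs_def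
      by (induction r) auto
    then have "nt bs = length (filter (\<lambda>z. z < k) r)" by simp
    also have "\<dots> = card (set (filter (\<lambda>z. z < k) r))"
      using dc(1) distinct_card[of "filter (\<lambda>z. z < k) r"] by simp
    also have "set (filter (\<lambda>z. z < k) r) = {1..<k}" using dc(1,2) assms by auto
    finally have "nt bs = k - 1" by simp
    then have bsB: "bs \<in> BS" unfolding BS_def bs_def using lr by simp
    have "\<phi> bs = cong_rel n `` {c}" unfolding \<phi>_def using rg cr bs_def by simp
    also have "\<dots> = C"
      unfolding w(2) cls[OF w(1)] cls[OF cp]
    proof (intro set_eqI iffI; simp)
      fix v assume "(c, v) \<in> EE" then show "(w, v) \<in> EE" using c(1) by (rule EE_trans[rotated])
    next
      fix v assume "(w, v) \<in> EE" then show "(c, v) \<in> EE" using EE_sym[OF c(1)] by (rule EE_trans[rotated])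
    qed
    finally show "C \<in> \<phi> ` BS" using bsB by blast
  qed
  have "card K = card BS" using card_image[OF inj] img by simp
  also have "\<dots> = (n - 1) choose (k - 1)" unfolding BS_def by (rule card_bool)
  finally show ?thesis unfolding K_def .
qed


end
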